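(* Let $0<q<1$, let $n$ be a positive integer and let $s_1,\dots,s_n$ be real numbers with $s_j>1$ for all $j$. Then \[ \sum_{\sigma\in\mathfrak{S}_n} \zeta\big[s_{\sigma(1)},s_{\sigma(2)},\dots,s_{\sigma(n)}\big] = \sum_{\mathscr{P}} (-1)^{n-|\mathscr{P}|} \prod_{P\in\mathscr{P}} (|P|-1)! \sum_{\nu=0}^{|P|-1}\binom{|P|-1}{\nu}(1-q)^{\nu}\,\zeta\Big[\sum_{j\in P}s_j-\nu\Big], \] where $\mathfrak{S}_n$ is the symmetric group on $\{1,\dots,n\}$ and the sum on the right runs over all unordered set partitions $\mathscr{P}$ of $\{1,\dots,n\}$ (sets of pairwise disjoint non-empty subsets with union $\{1,\dots,n\}$), $|\mathscr{P}|$ being the number of blocks.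
   Context: Fix $0<q<1$. For real $x$, $[x]_q := (1-q^x)/(1-q)$. For an integer $m\ge1$ and real $s_1,\dots,s_m$ with $s_1>1$ and $s_j\ge1$ for $j\ge2$, the multiple $q$-zeta function is $\zeta[s_1,\dots,s_m] := \sum_{k_1>\cdots>k_m>0}\prod_{j=1}^m q^{(s_j-1)k_j}/[k_j]_q^{s_j}$ (sum over positive integers). *)

theory Defs
  imports "HOL-Analysis.Analysis" "HOL-Library.Disjoint_Sets" "HOL-Combinatorics.Permutations"
begin

definition qint :: "real \<Rightarrow> real \<Rightarrow> real" where
  "qint q x = (1 - q powr x) / (1 - q)"

definition mzeta_idx :: "nat \<Rightarrow> nat list set" where
  "mzeta_idx m = {ks. length ks = m \<and> sorted_wrt (>) ks \<and> (\<forall>k\<in>set ks. 0 < k)}"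

definition mqzeta :: "real \<Rightarrow> real list \<Rightarrow> real" where
  "mqzeta q s = (\<Sum>\<^sub>\<infinity> ks \<in> mzeta_idx (length s).
      \<Prod>j<length s. q powr ((s ! j - 1) * real (ks ! j)) / (qint q (real (ks ! j))) powr (s ! j))"

end

theory Submission
  imports Defs
begin


definition pins :: "'a \<Rightarrow> 'a set set \<times> 'a set option \<Rightarrow> 'a set set" where
  "pins a = (\<lambda>(P, ob). case ob of None \<Rightarrow> insert {a} P | Some B \<Rightarrow> insert (insert a B) (P - {B}))"

lemma partition_on_remove:
  assumes "partition_on A P" "B \<in> P"
  shows "partition_on (A - B) (P - {B})"
proof -
  have d: "disjnt B (\<Union>(P - {B}))"
    using assms partition_onD2[OF assms(1)] by (auto simp: disjnt_def disjoint_def)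
  have "P = insert B (P - {B})" using assms by auto
  with assms(1) have "partition_on A (insert B (P - {B}))" by simp
  then show ?thesis using partition_on_insert[OF d] by simp
qed

lemma pins_block:
  assumes "partition_on A P" "a \<notin> A" "C \<in> pins a (P, ob)" "a \<in> C"
  shows "C = (case ob of None \<Rightarrow> {a} | Some B \<Rightarrow> insert a B)"
proof -
  have "\<forall>D\<in>P. a \<notin> D" using assms(1,2) partition_onD1 by blast
  then show ?thesis using assms(3,4) by (cases ob) (auto simp: pins_def)
qed

lemma pins_inj_core:
  assumes aA: "a \<notin> A"
  assumes h1: "(P1, ob1) \<in> (SIGMA P:{P. partition_on A P}. insert None (Some ` P))"
     and h2: "(P2, ob2) \<in> (SIGMA P:{P. partition_on A P}. insert None (Some ` P))"
     and eq: "pins a (P1, ob1) = pins a (P2, ob2)"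
  shows "P1 = P2 \<and> ob1 = ob2"
proof -
  have p1: "partition_on A P1" and p2: "partition_on A P2" using h1 h2 by auto
  have na1: "\<forall>D\<in>P1. a \<notin> D" using p1 aA partition_onD1 by blast
  have na2: "\<forall>D\<in>P2. a \<notin> D" using p2 aA partition_onD1 by blast
  define c1 where "c1 = (case ob1 of None \<Rightarrow> {a} | Some B \<Rightarrow> insert a B)"
  define c2 where "c2 = (case ob2 of None \<Rightarrow> {a} | Some B \<Rightarrow> insert a B)"
  have c1in: "c1 \<in> pins a (P1, ob1)" by (cases ob1) (auto simp: pins_def c1_def)
  have "a \<in> c1" by (cases ob1) (auto simp: c1_def)
  then have c12: "c1 = c2" using pins_block[OF p2 aA, of c1 ob2] c1in eq by (simp add: c2_def)
  show "P1 = P2 \<and> ob1 = ob2"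
  proof (cases ob1)
    case None
    show ?thesis
    proof (cases ob2)
      case None
      with \<open>ob1 = None\<close> eq have "insert {a} P1 = insert {a} P2" by (simp add: pins_def)
      moreover have "{a} \<notin> P1" "{a} \<notin> P2" using na1 na2 by auto
      ultimately have "P1 = P2" by (metis insert_ident)
      then show ?thesis using None \<open>ob1 = None\<close> by simp
    next
      case (Some B2)
      have "B2 \<in> P2" using h2 Some by auto
      then have "B2 \<noteq> {}" "a \<notin> B2" using p2 na2 partition_onD3 by blast+
      moreover have "{a} = insert a B2" using c12 None Some by (simp add: c1_def c2_def)
      ultimately show ?thesis by auto
    qed
  next
    case (Some B1)
    have "B1 \<in> P1" using h1 Some by auto
    then have B1: "B1 \<noteq> {}" "a \<notin> B1" using p1 na1 partition_onD3 by blast+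
    show ?thesis
    proof (cases ob2)
      case None
      have "{a} = insert a B1" using c12 None Some by (simp add: c1_def c2_def)
      then show ?thesis using B1 by auto
    next
      case (Some B2)
      have "B2 \<in> P2" using h2 Some by auto
      then have B2: "a \<notin> B2" using na2 by blast
      have "insert a B1 = insert a B2" using c12 Some \<open>ob1 = Some B1\<close> by (simp add: c1_def c2_def)
      then have bb: "B1 = B2" using B1 B2 by (metis insert_ident)
      have "insert (insert a B1) (P1 - {B1}) = insert (insert a B2) (P2 - {B2})"
        using eq Some \<open>ob1 = Some B1\<close> by (simp add: pins_def)
      moreover have "insert a B1 \<notin> P1 - {B1}" "insert a B2 \<notin> P2 - {B2}" using na1 na2 by auto
      ultimately have "P1 - {B1} = P2 - {B2}" using bb by (metis insert_ident)
      then have "P1 = P2" using bb \<open>B1 \<in> P1\<close> \<open>B2 \<in> P2\<close> by blast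
      then show ?thesis using bb Some \<open>ob1 = Some B1\<close> by simp
    qed
  qed
qed

lemma pins_inj:
  assumes "a \<notin> A"
  shows "inj_on (pins a) (SIGMA P:{P. partition_on A P}. insert None (Some ` P))"
proof (rule inj_onI)
  fix x y assume "x \<in> (SIGMA P:{P. partition_on A P}. insert None (Some ` P))"
    "y \<in> (SIGMA P:{P. partition_on A P}. insert None (Some ` P))" "pins a x = pins a y"
  then show "x = y" using pins_inj_core[OF assms, of "fst x" "snd x" "fst y" "snd y"] by (simp add: prod_eq_iff)
qed

lemma pins_image:
  assumes "a \<notin> A"
  shows "pins a ` (SIGMA P:{P. partition_on A P}. insert None (Some ` P)) = {P. partition_on (insert a A) P}"
proof (intro equalityI subsetI)
  fix Q assume "Q \<in> pins a ` (SIGMA P:{P. partition_on A P}. insert None (Some ` P))"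
  then obtain P ob where p: "partition_on A P" and o: "ob \<in> insert None (Some ` P)" and Q: "Q = pins a (P, ob)"
    by auto
  have U: "\<Union>P = A" using p partition_onD1 by blast
  show "Q \<in> {P. partition_on (insert a A) P}"
  proof (cases ob)
    case None
    have d: "disjnt {a} (\<Union>P)" using U assms by (auto simp: disjnt_def)
    have "insert a A - {a} = A" using assms by auto
    then show ?thesis using partition_on_insert[OF d] p Q None by (simp add: pins_def)
  next
    case (Some B)
    with o have B: "B \<in> P" by auto
    have pr: "partition_on (A - B) (P - {B})" using partition_on_remove[OF p B] .
    have d: "disjnt (insert a B) (\<Union>(P - {B}))" using pr assms partition_onD1 by (auto simp: disjnt_def)
    have e: "insert a A - insert a B = A - B" using assms by auto
    have "B \<subseteq> A" "B \<noteq> {}" using B U p partition_onD3 by blast+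
    then have "B \<subseteq> insert a A" by blast
    then show ?thesis using partition_on_insert[OF d, of "insert a A"] pr Q Some e by (simp add: pins_def)
  qed
next
  fix Q assume "Q \<in> {P. partition_on (insert a A) P}"
  then have q: "partition_on (insert a A) Q" by simp
  then obtain C where C: "C \<in> Q" "a \<in> C" using partition_onD1 by blast
  show "Q \<in> pins a ` (SIGMA P:{P. partition_on A P}. insert None (Some ` P))"
  proof (cases "C = {a}")
    case True
    have pr: "partition_on (insert a A - C) (Q - {C})" using partition_on_remove[OF q C(1)] .
    have "insert a A - C = A" using True assms by auto
    then have "partition_on A (Q - {C})" using pr by simp
    moreover have "Q = pins a (Q - {C}, None)" using True C by (auto simp: pins_def)
    ultimately show ?thesis by force
  next
    case False
    define B where "B = C - {a}"
    have Bne: "B \<noteq> {}" using False C by (auto simp: B_def)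
    have pr: "partition_on (insert a A - C) (Q - {C})" using partition_on_remove[OF q C(1)] .
    have e: "insert a A - C = A - B" using assms C by (auto simp: B_def)
    have UQ: "\<Union>(Q - {C}) = A - B" using pr e partition_onD1 by metis
    have d: "disjnt B (\<Union>(Q - {C}))" using UQ by (auto simp: disjnt_def)
    have BA: "B \<subseteq> A" using q C partition_onD1 by (fastforce simp: B_def)
    have pP: "partition_on A (insert B (Q - {C}))"
      using partition_on_insert[OF d] pr e Bne BA by (metis Diff_partition)
    have BnQ: "B \<notin> Q - {C}" using UQ Bne by blast
    have "insert a B = C" using C by (auto simp: B_def)
    then have "Q = pins a (insert B (Q - {C}), Some B)" using BnQ C by (auto simp: pins_def)
    moreover have "(insert B (Q - {C}), Some B) \<in> (SIGMA P:{P. partition_on A P}. insert None (Some ` P))"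
      using pP by auto
    ultimately show ?thesis by blast
  qed
qed

lemma sum_partition_insert:
  assumes "finite A" "a \<notin> A"
  shows "(\<Sum>Q\<in>{P. partition_on (insert a A) P}. F Q) =
    (\<Sum>P\<in>{P. partition_on A P}. F (insert {a} P) + (\<Sum>B\<in>P. F (insert (insert a B) (P - {B}))))"
proof -
  have fin: "finite {P. partition_on A P}" using finitely_many_partition_on[OF assms(1)] .
  have inner: "F (insert {a} P) + (\<Sum>B\<in>P. F (insert (insert a B) (P - {B}))) =
      (\<Sum>ob\<in>insert None (Some ` P). F (pins a (P, ob)))" if "partition_on A P" for P
  proof -
    have fP: "finite P" using finite_elements[OF assms(1) that] .
    have "(\<Sum>ob\<in>insert None (Some ` P). F (pins a (P, ob))) =
        F (pins a (P, None)) + (\<Sum>ob\<in>Some ` P. F (pins a (P, ob)))"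
      using fP by (subst sum.insert) auto
    also have "(\<Sum>ob\<in>Some ` P. F (pins a (P, ob))) = (\<Sum>B\<in>P. F (pins a (P, Some B)))"
      by (subst sum.reindex) auto
    finally show ?thesis by (simp add: pins_def)
  qed
  have "(\<Sum>P\<in>{P. partition_on A P}. F (insert {a} P) + (\<Sum>B\<in>P. F (insert (insert a B) (P - {B})))) =
      (\<Sum>P\<in>{P. partition_on A P}. \<Sum>ob\<in>insert None (Some ` P). F (pins a (P, ob)))"
    using inner by (intro sum.cong) auto
  also have "\<dots> = (\<Sum>x\<in>(SIGMA P:{P. partition_on A P}. insert None (Some ` P)). F (pins a x))"
    using fin finite_elements[OF assms(1)] by (subst sum.Sigma) auto
  also have "\<dots> = (\<Sum>Q\<in>pins a ` (SIGMA P:{P. partition_on A P}. insert None (Some ` P)). F Q)"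
    by (rule sum.reindex[OF pins_inj[OF assms(2)], symmetric, unfolded comp_def])
  also have "\<dots> = (\<Sum>Q\<in>{P. partition_on (insert a A) P}. F Q)"
    using pins_image[OF assms(2)] by simp
  finally show ?thesis by simp
qed

definition IM :: "'a set \<Rightarrow> 'b set \<Rightarrow> ('a \<Rightarrow> 'b) set" where
  "IM A K = {k \<in> A \<rightarrow>\<^sub>E K. inj_on k A}"

lemma IM_insert:
  assumes "a \<notin> A"
  shows "IM (insert a A) K = (\<lambda>(k, x). k(a := x)) ` (SIGMA k:IM A K. K - k ` A)"
proof (intro equalityI subsetI)
  fix k' assume k': "k' \<in> IM (insert a A) K"
  define k where "k = k'(a := undefined)"
  have "k \<in> IM A K" using k' assms by (auto simp: IM_def k_def PiE_def extensional_def inj_on_def)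
  moreover have "k' a \<in> K - k ` A" using k' assms by (auto simp: IM_def k_def inj_on_def)
  moreover have "k' = k(a := k' a)" by (simp add: k_def)
  ultimately show "k' \<in> (\<lambda>(k, x). k(a := x)) ` (SIGMA k:IM A K. K - k ` A)"
    by (intro image_eqI[of _ _ "(k, k' a)"]) auto
next
  fix k' assume "k' \<in> (\<lambda>(k, x). k(a := x)) ` (SIGMA k:IM A K. K - k ` A)"
  then obtain k x where k: "k \<in> IM A K" and x: "x \<in> K" "x \<notin> k ` A" and k': "k' = k(a := x)" by auto
  show "k' \<in> IM (insert a A) K"
    using k x assms unfolding k' IM_def
    by (auto simp: PiE_def extensional_def inj_on_def Pi_def)
qed

lemma IM_insert_inj:
  assumes "a \<notin> A"
  shows "inj_on (\<lambda>(k, x). k(a := x)) (SIGMA k:IM A K. K - k ` A)"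
proof (rule inj_onI, clarsimp)
  fix k1 x1 k2 x2 assume h: "k1 \<in> IM A K" "k2 \<in> IM A K" "k1(a := x1) = k2(a := x2)"
  have "x1 = x2" using fun_cong[OF h(3), of a] by simp
  moreover have "k1 = k2"
  proof
    fix j show "k1 j = k2 j"
    proof (cases "j = a")
      case True then show ?thesis using h(1,2) assms by (auto simp: IM_def PiE_def extensional_def)
    next
      case False then show ?thesis using fun_cong[OF h(3), of j] by simp
    qed
  qed
  ultimately show "k1 = k2 \<and> x1 = x2" by simp
qed

lemma finite_IM: "finite A \<Longrightarrow> finite K \<Longrightarrow> finite (IM A K)"
  unfolding IM_def by (rule finite_subset[of _ "A \<rightarrow>\<^sub>E K"]) (auto intro: finite_PiE)

lemma L_insert:
  fixes w :: "'a \<Rightarrow> 'b \<Rightarrow> real"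
  assumes "finite A" "finite K" "a \<notin> A"
  shows "(\<Sum>k\<in>IM (insert a A) K. \<Prod>j\<in>insert a A. w j (k j)) =
     (\<Sum>x\<in>K. w a x) * (\<Sum>k\<in>IM A K. \<Prod>j\<in>A. w j (k j))
     - (\<Sum>b\<in>A. \<Sum>k\<in>IM A K. \<Prod>j\<in>A. (w(b := (\<lambda>x. w b x * w a x))) j (k j))"
proof -
  have "(\<Sum>k\<in>IM (insert a A) K. \<Prod>j\<in>insert a A. w j (k j)) =
      (\<Sum>(k, x)\<in>(SIGMA k:IM A K. K - k ` A). \<Prod>j\<in>insert a A. w j ((k(a := x)) j))"
    unfolding IM_insert[OF assms(3)] by (subst sum.reindex[OF IM_insert_inj[OF assms(3)]]) (simp add: comp_def case_prod_unfold)
  also have "\<dots> = (\<Sum>k\<in>IM A K. \<Sum>x\<in>K - k ` A. w a x * (\<Prod>j\<in>A. w j (k j)))"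
  proof -
    have "(\<Sum>(k, x)\<in>(SIGMA k:IM A K. K - k ` A). \<Prod>j\<in>insert a A. w j ((k(a := x)) j))
       = (\<Sum>k\<in>IM A K. \<Sum>x\<in>K - k ` A. \<Prod>j\<in>insert a A. w j ((k(a := x)) j))"
      using finite_IM[OF assms(1,2)] assms(2) by (subst sum.Sigma) auto
    also have "\<dots> = (\<Sum>k\<in>IM A K. \<Sum>x\<in>K - k ` A. w a x * (\<Prod>j\<in>A. w j (k j)))"
    proof (intro sum.cong refl)
      fix k x
      have "(\<Prod>j\<in>A. w j ((k(a := x)) j)) = (\<Prod>j\<in>A. w j (k j))"
        using assms(3) by (intro prod.cong) auto
      then show "(\<Prod>j\<in>insert a A. w j ((k(a := x)) j)) = w a x * (\<Prod>j\<in>A. w j (k j))"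
        using assms(1,3) by simp
    qed
    finally show ?thesis .
  qed
  also have "\<dots> = (\<Sum>k\<in>IM A K. (\<Sum>x\<in>K. w a x) * (\<Prod>j\<in>A. w j (k j))
       - (\<Sum>b\<in>A. (\<Prod>j\<in>A. (w(b := (\<lambda>x. w b x * w a x))) j (k j))))"
  proof (intro sum.cong refl)
    fix k assume k: "k \<in> IM A K"
    have sub: "k ` A \<subseteq> K" using k by (auto simp: IM_def)
    have inj: "inj_on k A" using k by (auto simp: IM_def)
    have "(\<Sum>x\<in>K - k ` A. w a x * (\<Prod>j\<in>A. w j (k j))) =
        (\<Sum>x\<in>K. w a x * (\<Prod>j\<in>A. w j (k j))) - (\<Sum>x\<in>k ` A. w a x * (\<Prod>j\<in>A. w j (k j)))"
      using sum_diff[OF assms(2) sub] by simp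
    also have "(\<Sum>x\<in>k ` A. w a x * (\<Prod>j\<in>A. w j (k j))) = (\<Sum>b\<in>A. w a (k b) * (\<Prod>j\<in>A. w j (k j)))"
      using sum.reindex[OF inj] by (simp add: comp_def)
    also have "\<dots> = (\<Sum>b\<in>A. (\<Prod>j\<in>A. (w(b := (\<lambda>x. w b x * w a x))) j (k j)))"
    proof (intro sum.cong refl)
      fix b assume b: "b \<in> A"
      define w' where "w' = w(b := (\<lambda>x. w b x * w a x))"
      have 1: "(\<Prod>j\<in>A. w' j (k j)) = w' b (k b) * (\<Prod>j\<in>A - {b}. w' j (k j))"
        by (rule prod.remove[OF assms(1) b])
      have 2: "(\<Prod>j\<in>A - {b}. w' j (k j)) = (\<Prod>j\<in>A - {b}. w j (k j))"
        by (intro prod.cong) (auto simp: w'_def)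
      have 3: "(\<Prod>j\<in>A. w j (k j)) = w b (k b) * (\<Prod>j\<in>A - {b}. w j (k j))"
        by (rule prod.remove[OF assms(1) b])
      have "w a (k b) * (\<Prod>j\<in>A. w j (k j)) = (\<Prod>j\<in>A. w' j (k j))"
        unfolding 1 2 3 by (simp add: w'_def)
      then show "w a (k b) * (\<Prod>j\<in>A. w j (k j)) = (\<Prod>j\<in>A. (w(b := (\<lambda>x. w b x * w a x))) j (k j))"
        by (simp add: w'_def)
    qed
    finally show "(\<Sum>x\<in>K - k ` A. w a x * (\<Prod>j\<in>A. w j (k j))) = (\<Sum>x\<in>K. w a x) * (\<Prod>j\<in>A. w j (k j))
       - (\<Sum>b\<in>A. (\<Prod>j\<in>A. (w(b := (\<lambda>x. w b x * w a x))) j (k j)))"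
      by (simp add: sum_distrib_right)
  qed
  also have "\<dots> = (\<Sum>x\<in>K. w a x) * (\<Sum>k\<in>IM A K. \<Prod>j\<in>A. w j (k j))
     - (\<Sum>b\<in>A. \<Sum>k\<in>IM A K. \<Prod>j\<in>A. (w(b := (\<lambda>x. w b x * w a x))) j (k j))"
    by (simp add: sum_subtractf sum_distrib_left sum.swap[of _ A])
  finally show ?thesis .
qed

definition ec :: "nat \<Rightarrow> real" where
  "ec m = (-1) ^ (m - 1) * fact (m - 1)"

definition Zs :: "'b set \<Rightarrow> ('a \<Rightarrow> 'b \<Rightarrow> real) \<Rightarrow> 'a set \<Rightarrow> real" where
  "Zs K w B = (\<Sum>x\<in>K. \<Prod>j\<in>B. w j x)"

definition Fp :: "'b set \<Rightarrow> ('a \<Rightarrow> 'b \<Rightarrow> real) \<Rightarrow> 'a set set \<Rightarrow> real" where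
  "Fp K w P = (\<Prod>B\<in>P. ec (card B) * Zs K w B)"

lemma ec_Suc: "m \<ge> 1 \<Longrightarrow> ec (Suc m) = - real m * ec m"
  by (cases m) (auto simp: ec_def algebra_simps)

lemma key_P:
  fixes w :: "'a \<Rightarrow> 'b \<Rightarrow> real"
  assumes fA: "finite A" and aA: "a \<notin> A" and P: "partition_on A P"
  shows "(\<Sum>B\<in>P. Fp K w (insert (insert a B) (P - {B}))) = - (\<Sum>b\<in>A. Fp K (w(b := (\<lambda>x. w b x * w a x))) P)"
proof -
  have fP: "finite P" using finite_elements[OF fA P] .
  have UP: "\<Union>P = A" using P partition_onD1 by blast
  have fB: "finite B" if "B \<in> P" for B using that UP fA by (meson Sup_upper finite_subset)
  have neB: "B \<noteq> {}" if "B \<in> P" for B using that P partition_onD3 by blast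
  have aB: "a \<notin> B" if "B \<in> P" for B using that UP aA by blast
  have disj: "\<forall>B\<in>P. \<forall>C\<in>P. B \<noteq> C \<longrightarrow> B \<inter> C = {}"
    using partition_onD2[OF P] by (auto simp: disjoint_def)
  define T where "T B = (\<Prod>C\<in>P - {B}. ec (card C) * Zs K w C)" for B
  have one: "Fp K (w(b := (\<lambda>x. w b x * w a x))) P = ec (card B) * Zs K w (insert a B) * T B"
    if B: "B \<in> P" and b: "b \<in> B" for B b
  proof -
    define w' where "w' = w(b := (\<lambda>x. w b x * w a x))"
    have "Fp K w' P = ec (card B) * Zs K w' B * (\<Prod>C\<in>P - {B}. ec (card C) * Zs K w' C)"
      unfolding Fp_def by (subst prod.remove[OF fP B]) simp
    also have "(\<Prod>C\<in>P - {B}. ec (card C) * Zs K w' C) = T B"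
      unfolding T_def
    proof (intro prod.cong refl)
      fix C assume C: "C \<in> P - {B}"
      then have "b \<notin> C" using disj B b by blast
      then have "(\<Prod>j\<in>C. w' j x) = (\<Prod>j\<in>C. w j x)" for x by (intro prod.cong) (auto simp: w'_def)
      then show "ec (card C) * Zs K w' C = ec (card C) * Zs K w C" by (simp add: Zs_def)
    qed
    also have "Zs K w' B = Zs K w (insert a B)"
    proof -
      have "(\<Prod>j\<in>B. w' j x) = (\<Prod>j\<in>insert a B. w j x)" for x
      proof -
        have "(\<Prod>j\<in>B. w' j x) = w' b x * (\<Prod>j\<in>B - {b}. w' j x)" by (rule prod.remove[OF fB[OF B] b])
        also have "(\<Prod>j\<in>B - {b}. w' j x) = (\<Prod>j\<in>B - {b}. w j x)" by (intro prod.cong) (auto simp: w'_def)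
        also have "(\<Prod>j\<in>insert a B. w j x) = w a x * (w b x * (\<Prod>j\<in>B - {b}. w j x))"
          using fB[OF B] aB[OF B] prod.remove[OF fB[OF B] b, of "\<lambda>j. w j x"] by simp
        ultimately show ?thesis by (simp add: w'_def)
      qed
      then show ?thesis by (simp add: Zs_def)
    qed
    finally have "Fp K w' P = ec (card B) * Zs K w (insert a B) * T B" .
    then show ?thesis by (simp only: w'_def)
  qed
  have two: "Fp K w (insert (insert a B) (P - {B})) = - real (card B) * ec (card B) * Zs K w (insert a B) * T B"
    if B: "B \<in> P" for B
  proof -
    have nin: "insert a B \<notin> P - {B}" using aB by blast
    have cB: "card (insert a B) = Suc (card B)" using fB[OF B] aB[OF B] by simp
    have c1: "card B \<ge> 1" using fB[OF B] neB[OF B] by (simp add: Suc_le_eq card_gt_0_iff)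
    have "Fp K w (insert (insert a B) (P - {B})) = ec (card (insert a B)) * Zs K w (insert a B) * T B"
      unfolding Fp_def T_def using fP nin by simp
    then show ?thesis using ec_Suc[OF c1] cB by simp
  qed
  have "(\<Sum>b\<in>A. Fp K (w(b := (\<lambda>x. w b x * w a x))) P) =
      (\<Sum>B\<in>P. \<Sum>b\<in>B. Fp K (w(b := (\<lambda>x. w b x * w a x))) P)"
    unfolding UP[symmetric] using sum.Union_disjoint[of P] fB disj by (simp add: comp_def)
  also have "\<dots> = (\<Sum>B\<in>P. real (card B) * (ec (card B) * Zs K w (insert a B) * T B))"
    using one by (intro sum.cong refl) simp
  also have "\<dots> = - (\<Sum>B\<in>P. Fp K w (insert (insert a B) (P - {B})))"
    using two by (simp add: sum_negf[symmetric] mult.assoc)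
  finally show ?thesis by simp
qed

lemma inj_partition:
  fixes w :: "'a \<Rightarrow> 'b \<Rightarrow> real"
  assumes "finite A" "finite K"
  shows "(\<Sum>k\<in>IM A K. \<Prod>j\<in>A. w j (k j)) = (\<Sum>P\<in>{P. partition_on A P}. Fp K w P)"
  using assms(1)
proof (induction A arbitrary: w rule: finite_induct)
  case empty
  have e1: "IM {} K = {\<lambda>_. undefined}" by (auto simp: IM_def)
  have e2: "{P. partition_on {} P} = {{}}" by (auto simp: partition_on_empty)
  show ?case unfolding e1 e2 by (simp add: Fp_def)
next
  case (insert a A)
  have fin: "finite {P. partition_on A P}" using finitely_many_partition_on[OF insert(1)] .
  have "(\<Sum>k\<in>IM (insert a A) K. \<Prod>j\<in>insert a A. w j (k j)) =
     (\<Sum>x\<in>K. w a x) * (\<Sum>P\<in>{P. partition_on A P}. Fp K w P)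
     - (\<Sum>b\<in>A. \<Sum>P\<in>{P. partition_on A P}. Fp K (w(b := (\<lambda>x. w b x * w a x))) P)"
  proof -
    have I2: "(\<Sum>b\<in>A. \<Sum>k\<in>IM A K. \<Prod>j\<in>A. (w(b := (\<lambda>x. w b x * w a x))) j (k j)) =
       (\<Sum>b\<in>A. \<Sum>P\<in>{P. partition_on A P}. Fp K (w(b := (\<lambda>x. w b x * w a x))) P)"
      by (intro sum.cong refl) (rule insert.IH)
    show ?thesis using L_insert[OF insert(1) assms(2) insert(2), of w] unfolding insert.IH[of w] I2 .
  qed
  also have "\<dots> = (\<Sum>P\<in>{P. partition_on A P}. Fp K w (insert {a} P) + (\<Sum>B\<in>P. Fp K w (insert (insert a B) (P - {B}))))"
  proof -
    have e1: "Fp K w (insert {a} P) = (\<Sum>x\<in>K. w a x) * Fp K w P" if P: "partition_on A P" for P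
    proof -
      have "{a} \<notin> P" using P insert(2) partition_onD1 by blast
      moreover have "finite P" using finite_elements[OF insert(1) P] .
      ultimately show ?thesis by (simp add: Fp_def Zs_def ec_def)
    qed
    have "(\<Sum>P\<in>{P. partition_on A P}. Fp K w (insert {a} P) + (\<Sum>B\<in>P. Fp K w (insert (insert a B) (P - {B}))))
      = (\<Sum>P\<in>{P. partition_on A P}. (\<Sum>x\<in>K. w a x) * Fp K w P - (\<Sum>b\<in>A. Fp K (w(b := (\<lambda>x. w b x * w a x))) P))"
      using e1 key_P[OF insert(1,2)] by (intro sum.cong refl) auto
    also have "\<dots> = (\<Sum>x\<in>K. w a x) * (\<Sum>P\<in>{P. partition_on A P}. Fp K w P)
     - (\<Sum>b\<in>A. \<Sum>P\<in>{P. partition_on A P}. Fp K (w(b := (\<lambda>x. w b x * w a x))) P)"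
      by (simp add: sum_subtractf sum_distrib_left sum.swap[of _ A])
    finally show ?thesis by simp
  qed
  also have "\<dots> = (\<Sum>P\<in>{P. partition_on (insert a A) P}. Fp K w P)"
    by (rule sum_partition_insert[OF insert(1,2), symmetric])
  finally show ?case .
qed

definition DL :: "nat \<Rightarrow> nat \<Rightarrow> nat list set" where
  "DL n N = {ks \<in> mzeta_idx n. \<forall>k\<in>set ks. k \<le> N}"

definition Phi :: "nat \<Rightarrow> (nat \<Rightarrow> nat) \<Rightarrow> nat list \<Rightarrow> nat \<Rightarrow> nat" where
  "Phi n \<sigma> ks = (\<lambda>j. if j \<in> {1..n} then ks ! (inv \<sigma> j - 1) else undefined)"

lemma mzeta_idx_distinct: "ks \<in> mzeta_idx n \<Longrightarrow> distinct ks"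
proof -
  assume "ks \<in> mzeta_idx n"
  then have "sorted_wrt (<) (rev ks)" by (simp add: mzeta_idx_def sorted_wrt_rev)
  then show "distinct ks" using strict_sorted_iff[of "rev ks"] by simp
qed

lemma Phi_image:
  assumes \<sigma>: "\<sigma> permutes {1..n}" and ks: "length ks = n"
  shows "Phi n \<sigma> ks ` {1..n} = set ks"
proof (intro equalityI subsetI)
  have isg: "inv \<sigma> permutes {1..n}" using permutes_inv[OF \<sigma>] .
  fix x assume "x \<in> Phi n \<sigma> ks ` {1..n}"
  then obtain j where j: "j \<in> {1..n}" and x: "x = ks ! (inv \<sigma> j - 1)" by (auto simp: Phi_def)
  have "inv \<sigma> j \<in> {1..n}" using permutes_in_image[OF isg] j by simp
  then show "x \<in> set ks" using x ks by auto
next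
  fix x assume "x \<in> set ks"
  then obtain i where i: "i < n" and x: "x = ks ! i" using ks by (auto simp: in_set_conv_nth)
  have j: "\<sigma> (Suc i) \<in> {1..n}" using permutes_in_image[OF \<sigma>] i by simp
  have "inv \<sigma> (\<sigma> (Suc i)) = Suc i" using permutes_inverses(2)[OF \<sigma>] by simp
  then have "Phi n \<sigma> ks (\<sigma> (Suc i)) = x" using j x by (simp add: Phi_def)
  then show "x \<in> Phi n \<sigma> ks ` {1..n}" using j by force
qed

lemma Phi_prod:
  assumes \<sigma>: "\<sigma> permutes {1..n}"
  shows "(\<Prod>j\<in>{1..n}. w j (Phi n \<sigma> ks j)) = (\<Prod>j<n. w (\<sigma> (Suc j)) (ks ! j))"
proof -
  have "(\<Prod>j\<in>{1..n}. w j (Phi n \<sigma> ks j)) = (\<Prod>i\<in>{1..n}. w (\<sigma> i) (Phi n \<sigma> ks (\<sigma> i)))"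
    using prod.reindex_bij_betw[OF permutes_imp_bij[OF \<sigma>], of "\<lambda>j. w j (Phi n \<sigma> ks j)"] by simp
  also have "\<dots> = (\<Prod>i\<in>{1..n}. w (\<sigma> i) (ks ! (i - 1)))"
  proof (intro prod.cong refl)
    fix i assume i: "i \<in> {1..n}"
    then have "\<sigma> i \<in> {1..n}" using permutes_in_image[OF \<sigma>] by simp
    then show "w (\<sigma> i) (Phi n \<sigma> ks (\<sigma> i)) = w (\<sigma> i) (ks ! (i - 1))"
      using permutes_inverses(2)[OF \<sigma>] by (simp add: Phi_def)
  qed
  also have "\<dots> = (\<Prod>j<n. w (\<sigma> (Suc j)) (ks ! j))"
    unfolding image_Suc_lessThan[symmetric] by (subst prod.reindex) auto
  finally show ?thesis .
qed

lemma Phi_inj: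
  "inj_on (\<lambda>(\<sigma>, ks). Phi n \<sigma> ks) ({\<sigma>. \<sigma> permutes {1..n}} \<times> DL n N)"
proof (rule inj_onI, clarify)
  fix \<sigma>1 ks1 \<sigma>2 ks2
  assume h: "\<sigma>1 permutes {1..n}" "ks1 \<in> DL n N" "\<sigma>2 permutes {1..n}" "ks2 \<in> DL n N"
    and eq: "Phi n \<sigma>1 ks1 = Phi n \<sigma>2 ks2"
  have l1: "length ks1 = n" and l2: "length ks2 = n" using h by (auto simp: DL_def mzeta_idx_def)
  have s1: "sorted_wrt (<) (rev ks1)" and s2: "sorted_wrt (<) (rev ks2)"
    using h by (auto simp: DL_def mzeta_idx_def sorted_wrt_rev)
  have "set ks1 = set ks2" using Phi_image[OF h(1) l1] Phi_image[OF h(3) l2] eq by simp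
  then have "rev ks1 = rev ks2" using strict_sorted_equal[OF s2 s1] by simp
  then have kk: "ks1 = ks2" by simp
  have d: "distinct ks1" using h(2) mzeta_idx_distinct by (auto simp: DL_def)
  have "inv \<sigma>1 = inv \<sigma>2"
  proof
    fix j show "inv \<sigma>1 j = inv \<sigma>2 j"
    proof (cases "j \<in> {1..n}")
      case True
      have a1: "inv \<sigma>1 j \<in> {1..n}" using permutes_in_image[OF permutes_inv[OF h(1)]] True by simp
      have a2: "inv \<sigma>2 j \<in> {1..n}" using permutes_in_image[OF permutes_inv[OF h(3)]] True by simp
      have "ks1 ! (inv \<sigma>1 j - 1) = ks1 ! (inv \<sigma>2 j - 1)"
        using fun_cong[OF eq, of j] True kk by (simp add: Phi_def)
      then have "inv \<sigma>1 j - 1 = inv \<sigma>2 j - 1" using nth_eq_iff_index_eq[OF d] a1 a2 l1 by auto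
      then show ?thesis using a1 a2 by auto
    next
      case False
      then show ?thesis using permutes_not_in[OF permutes_inv[OF h(1)]] permutes_not_in[OF permutes_inv[OF h(3)]]
        by simp
    qed
  qed
  then have "\<sigma>1 = \<sigma>2" using permutes_inv_inv[OF h(1)] permutes_inv_inv[OF h(3)] by metis
  then show "\<sigma>1 = \<sigma>2 \<and> ks1 = ks2" using kk by simp
qed

lemma Phi_image_full:
  "(\<lambda>(\<sigma>, ks). Phi n \<sigma> ks) ` ({\<sigma>. \<sigma> permutes {1..n}} \<times> DL n N) = IM {1..n} {1..N}"
proof (intro equalityI subsetI)
  fix k assume "k \<in> (\<lambda>(\<sigma>, ks). Phi n \<sigma> ks) ` ({\<sigma>. \<sigma> permutes {1..n}} \<times> DL n N)"
  then obtain \<sigma> ks where \<sigma>: "\<sigma> permutes {1..n}" and ks: "ks \<in> DL n N" and k: "k = Phi n \<sigma> ks" by auto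
  have l: "length ks = n" using ks by (auto simp: DL_def mzeta_idx_def)
  have d: "distinct ks" using ks mzeta_idx_distinct by (auto simp: DL_def)
  have im: "k ` {1..n} = set ks" using Phi_image[OF \<sigma> l] k by simp
  have sub: "set ks \<subseteq> {1..N}" using ks by (auto simp: DL_def mzeta_idx_def Suc_le_eq)
  have "inj_on k {1..n}" using im d l by (simp add: inj_on_iff_eq_card distinct_card)
  moreover have "k \<in> {1..n} \<rightarrow>\<^sub>E {1..N}"
  proof -
    have a: "\<forall>x\<in>{1..n}. k x \<in> {1..N}" using im sub by blast
    have b: "\<forall>x. x \<notin> {1..n} \<longrightarrow> k x = undefined" by (simp add: k Phi_def)
    show ?thesis using a b by (auto simp: PiE_def extensional_def)
  qed
  ultimately show "k \<in> IM {1..n} {1..N}" by (simp add: IM_def)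
next
  fix k assume k: "k \<in> IM {1..n} {1..N}"
  have inj: "inj_on k {1..n}" and kP: "k \<in> {1..n} \<rightarrow>\<^sub>E {1..N}" using k by (auto simp: IM_def)
  define ks where "ks = rev (sorted_list_of_set (k ` {1..n}))"
  have setks: "set ks = k ` {1..n}" by (simp add: ks_def)
  have d: "distinct ks" by (simp add: ks_def)
  have l: "length ks = n" using inj by (simp add: ks_def card_image)
  have sw: "sorted_wrt (>) ks" by (simp add: ks_def sorted_wrt_rev)
  have ksD: "ks \<in> DL n N" using l sw setks kP by (auto simp: DL_def mzeta_idx_def PiE_def Pi_def)
  have bn: "bij_betw ((!) ks) {..<n} (set ks)" using bij_betw_nth[OF d] l by simp
  have injn: "inj_on ((!) ks) {..<n}" using bn by (simp add: bij_betw_def)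
  have imn: "(!) ks ` {..<n} = set ks" using bn by (simp add: bij_betw_def)
  define \<tau> where "\<tau> j = (if j \<in> {1..n} then Suc (the_inv_into {..<n} ((!) ks) (k j)) else j)" for j
  have kin: "k j \<in> (!) ks ` {..<n}" if "j \<in> {1..n}" for j using that imn setks by simp
  have ti: "the_inv_into {..<n} ((!) ks) (k j) < n" if "j \<in> {1..n}" for j
  proof -
    have "the_inv_into {..<n} ((!) ks) (k j) \<in> {..<n}"
      by (rule the_inv_into_into[OF injn kin[OF that]]) (rule subset_refl)
    then show ?thesis by (simp only: lessThan_iff)
  qed
  have ksti: "ks ! (the_inv_into {..<n} ((!) ks) (k j)) = k j" if "j \<in> {1..n}" for j
    using f_the_inv_into_f[OF injn kin[OF that]] .
  have tin: "\<tau> ` {1..n} \<subseteq> {1..n}" using ti by (auto simp: \<tau>_def Suc_le_eq)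
  have tinj: "inj_on \<tau> {1..n}"
  proof (rule inj_onI)
    fix x y assume x: "x \<in> {1..n}" and y: "y \<in> {1..n}" and e: "\<tau> x = \<tau> y"
    then have "the_inv_into {..<n} ((!) ks) (k x) = the_inv_into {..<n} ((!) ks) (k y)" by (simp add: \<tau>_def)
    then have "ks ! the_inv_into {..<n} ((!) ks) (k x) = ks ! the_inv_into {..<n} ((!) ks) (k y)"
      by (rule arg_cong)
    then have "k x = k y" unfolding ksti[OF x] ksti[OF y] .
    then show "x = y" by (rule inj_onD[OF inj _ x y])
  qed
  have "\<tau> ` {1..n} = {1..n}" by (rule endo_inj_surj[OF _ tin tinj]) simp
  then have "bij_betw \<tau> {1..n} {1..n}" using tinj by (simp add: bij_betw_def)
  then have tp: "\<tau> permutes {1..n}" by (rule bij_imp_permutes) (auto simp: \<tau>_def)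
  define \<sigma> where "\<sigma> = inv \<tau>"
  have sp: "\<sigma> permutes {1..n}" using permutes_inv[OF tp] by (simp add: \<sigma>_def)
  have invs: "inv \<sigma> = \<tau>" using permutes_inv_inv[OF tp] by (simp add: \<sigma>_def)
  have "Phi n \<sigma> ks = k"
  proof
    fix j show "Phi n \<sigma> ks j = k j"
    proof (cases "j \<in> {1..n}")
      case True then show ?thesis using ksti[OF True] by (simp add: Phi_def invs \<tau>_def)
    next
      case False then show ?thesis using kP by (auto simp: Phi_def PiE_def extensional_def)
    qed
  qed
  then show "k \<in> (\<lambda>(\<sigma>, ks). Phi n \<sigma> ks) ` ({\<sigma>. \<sigma> permutes {1..n}} \<times> DL n N)"
    using sp ksD by (intro image_eqI[of _ _ "(\<sigma>, ks)"]) auto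
qed

lemma finite_DL: "finite (DL n N)"
proof (rule finite_subset)
  show "DL n N \<subseteq> {ks. set ks \<subseteq> {..N} \<and> length ks = n}" by (auto simp: DL_def mzeta_idx_def)
  show "finite {ks. set ks \<subseteq> {..N} \<and> length ks = n}" by (rule finite_lists_length_eq) simp
qed

lemma perm_dec:
  "(\<Sum>\<sigma>\<in>{\<sigma>. \<sigma> permutes {1..n}}. \<Sum>ks\<in>DL n N. \<Prod>j<n. w (\<sigma> (Suc j)) (ks ! j)) =
   (\<Sum>k\<in>IM {1..n} {1..N}. \<Prod>j\<in>{1..n}. w j (k j))"
proof -
  have "(\<Sum>\<sigma>\<in>{\<sigma>. \<sigma> permutes {1..n}}. \<Sum>ks\<in>DL n N. \<Prod>j<n. w (\<sigma> (Suc j)) (ks ! j)) =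
     (\<Sum>(\<sigma>, ks)\<in>{\<sigma>. \<sigma> permutes {1..n}} \<times> DL n N. \<Prod>j<n. w (\<sigma> (Suc j)) (ks ! j))"
    by (rule sum.cartesian_product)
  also have "\<dots> = (\<Sum>k\<in>IM {1..n} {1..N}. \<Prod>j\<in>{1..n}. w j (k j))"
  proof (rule sym, rule sum.reindex_cong[OF Phi_inj Phi_image_full[symmetric]])
    fix x assume x: "x \<in> {\<sigma>. \<sigma> permutes {1..n}} \<times> DL n N"
    obtain \<sigma> ks where xe: "x = (\<sigma>, ks)" by (cases x)
    have "\<sigma> permutes {1..n}" using x xe by simp
    from Phi_prod[OF this, of w ks]
    show "(\<Prod>j\<in>{1..n}. w j (((\<lambda>(\<sigma>, ks). Phi n \<sigma> ks) x) j)) = (case x of (\<sigma>, ks) \<Rightarrow> \<Prod>j<n. w (\<sigma> (Suc j)) (ks ! j))"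
      unfolding xe by simp
  qed
  finally show ?thesis .
qed



definition gq :: "real \<Rightarrow> real \<Rightarrow> nat \<Rightarrow> real" where
  "gq q t k = q powr ((t - 1) * real k) / qint q (real k) powr t"

lemma mqzeta_gq: "mqzeta q ts = (\<Sum>\<^sub>\<infinity>ks\<in>mzeta_idx (length ts). \<Prod>j<length ts. gq q (ts ! j) (ks ! j))"
  by (simp add: mqzeta_def gq_def)

lemma gq_nonneg: "0 < q \<Longrightarrow> 0 \<le> gq q t k"
  by (simp add: gq_def)

lemma qint_ge1:
  assumes "0 < q" "q < 1" "1 \<le> k"
  shows "1 \<le> qint q (real k)"
proof -
  have "q ^ k \<le> q ^ 1" using assms by (intro power_decreasing) auto
  then have "q powr real k \<le> q" using assms by (simp add: powr_realpow)
  then show ?thesis using assms by (simp add: qint_def field_simps)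
qed

lemma gq_zero: "gq q t 0 = 0"
  by (simp add: gq_def qint_def)

lemma gq_bound:
  assumes "0 < q" "q < 1" "1 < t"
  shows "gq q t k \<le> (q powr (t - 1)) ^ k"
proof (cases "k = 0")
  case True then show ?thesis by (simp add: gq_zero)
next
  case False
  then have Q: "1 \<le> qint q (real k)" using qint_ge1[OF assms(1,2)] by simp
  then have Qt: "1 \<le> qint q (real k) powr t" using assms(3) by (simp add: ge_one_powr_ge_zero)
  have "gq q t k \<le> q powr ((t - 1) * real k)"
    unfolding gq_def using Qt assms(1) by (simp add: divide_le_eq)
  also have "\<dots> = (q powr (t - 1)) ^ k" using assms(1) by (simp add: powr_powr[symmetric] powr_realpow)
  finally show ?thesis .
qed

lemma gq_summable:
  assumes "0 < q" "q < 1" "1 < t"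
  shows "summable (gq q t)"
proof (rule summable_comparison_test[of _ "\<lambda>k. (q powr (t - 1)) ^ k"])
  show "\<exists>N. \<forall>n\<ge>N. norm (gq q t n) \<le> (q powr (t - 1)) ^ n"
    using gq_bound[OF assms] gq_nonneg[OF assms(1)] by auto
  have "q powr (t - 1) < 1 powr (t - 1)" using assms by (intro powr_less_mono2) auto
    then have "q powr (t - 1) < 1" by simp
  then show "summable (\<lambda>k. (q powr (t - 1)) ^ k)" using assms by (intro summable_geometric) simp
qed

lemma DL_bound:
  fixes f :: "nat \<Rightarrow> nat \<Rightarrow> real"
  assumes nn: "\<And>j k. 0 \<le> f j k"
  shows "(\<Sum>ks\<in>DL n N. \<Prod>j<n. f j (ks ! j)) \<le> (\<Prod>j<n. \<Sum>x\<in>{1..N}. f j x)"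
proof -
  define r where "r ks = restrict (\<lambda>j. ks ! j) {..<n}" for ks :: "nat list"
  have inj: "inj_on r (DL n N)"
  proof (rule inj_onI)
    fix xs ys assume xs: "xs \<in> DL n N" and ys: "ys \<in> DL n N" and e: "r xs = r ys"
    have l: "length xs = n" "length ys = n" using xs ys by (auto simp: DL_def mzeta_idx_def)
    show "xs = ys"
    proof (rule nth_equalityI)
      show "length xs = length ys" using l by simp
      fix i assume "i < length xs"
      then show "xs ! i = ys ! i" using fun_cong[OF e, of i] l by (simp add: r_def)
    qed
  qed
  have "(\<Sum>ks\<in>DL n N. \<Prod>j<n. f j (ks ! j)) = (\<Sum>k\<in>r ` DL n N. \<Prod>j<n. f j (k j))"
    by (subst sum.reindex[OF inj]) (auto simp: r_def intro!: sum.cong prod.cong)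
  also have "\<dots> \<le> (\<Sum>k\<in>PiE {..<n} (\<lambda>_. {1..N}). \<Prod>j<n. f j (k j))"
  proof (rule sum_mono2)
    show "finite (PiE {..<n} (\<lambda>_. {1..N}))" by (intro finite_PiE) auto
    show "r ` DL n N \<subseteq> PiE {..<n} (\<lambda>_. {1..N})"
    proof
      fix k assume "k \<in> r ` DL n N"
      then obtain ks where ks: "ks \<in> DL n N" and k: "k = r ks" by auto
      have "\<forall>x\<in>set ks. 1 \<le> x \<and> x \<le> N" "length ks = n" using ks by (auto simp: DL_def mzeta_idx_def Suc_le_eq)
      then show "k \<in> PiE {..<n} (\<lambda>_. {1..N})" by (auto simp: k r_def)
    qed
    show "\<And>b. b \<in> PiE {..<n} (\<lambda>_. {1..N}) - r ` DL n N \<Longrightarrow> 0 \<le> (\<Prod>j<n. f j (b j))"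
      using nn by (simp add: prod_nonneg)
  qed
  also have "\<dots> = (\<Prod>j<n. \<Sum>x\<in>{1..N}. f j x)"
    by (rule prod_sum_PiE[symmetric]) auto
  finally show ?thesis .
qed

lemma DL_sub: "DL n N \<subseteq> mzeta_idx n"
  by (auto simp: DL_def)

lemma DL_covers:
  assumes "finite F" "F \<subseteq> mzeta_idx n"
  shows "\<exists>N0. \<forall>N\<ge>N0. F \<subseteq> DL n N"
proof -
  define N0 where "N0 = Max (insert 0 (\<Union>ks\<in>F. set ks))"
  have fin: "finite (insert 0 (\<Union>ks\<in>F. set ks))" using assms(1) by auto
  have "F \<subseteq> DL n N" if "N \<ge> N0" for N
  proof
    fix ks assume ks: "ks \<in> F"
    have "\<forall>k\<in>set ks. k \<le> N0" using ks fin by (auto simp: N0_def intro: Max_ge)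
    then show "ks \<in> DL n N" using ks assms(2) that by (auto simp: DL_def)
  qed
  then show ?thesis by blast
qed

lemma mq_trunc:
  assumes q: "0 < q" "q < 1" and ts: "\<And>j. j < length ts \<Longrightarrow> 1 < ts ! j"
  shows "(\<lambda>N. \<Sum>ks\<in>DL (length ts) N. \<Prod>j<length ts. gq q (ts ! j) (ks ! j)) \<longlonglongrightarrow> mqzeta q ts"
proof -
  define n where "n = length ts"
  define h where "h ks = (\<Prod>j<n. gq q (ts ! j) (ks ! j))" for ks
  define B where "B = (\<Prod>j<n. suminf (gq q (ts ! j)))"
  have hnn: "0 \<le> h ks" for ks unfolding h_def using gq_nonneg[OF q(1)] by (simp add: prod_nonneg)
  have bDL: "sum h (DL n N) \<le> B" for N
  proof -
    have "sum h (DL n N) \<le> (\<Prod>j<n. \<Sum>x\<in>{1..N}. gq q (ts ! j) x)"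
      unfolding h_def by (rule DL_bound) (rule gq_nonneg[OF q(1)])
    also have "\<dots> \<le> B" unfolding B_def
    proof (rule prod_mono)
      fix j assume "j \<in> {..<n}"
      then have "1 < ts ! j" using ts by (simp add: n_def)
      then show "0 \<le> (\<Sum>x\<in>{1..N}. gq q (ts ! j) x) \<and> (\<Sum>x\<in>{1..N}. gq q (ts ! j) x) \<le> suminf (gq q (ts ! j))"
        using gq_nonneg[OF q(1)] gq_summable[OF q] by (auto intro: sum_nonneg sum_le_suminf)
    qed
    finally show ?thesis .
  qed
  have summ: "h summable_on mzeta_idx n"
  proof (rule nonneg_bdd_above_summable_on)
    show "\<And>x. x \<in> mzeta_idx n \<Longrightarrow> 0 \<le> h x" using hnn by simp
    show "bdd_above (sum h ` {F. F \<subseteq> mzeta_idx n \<and> finite F})"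
    proof (rule bdd_aboveI)
      fix y assume "y \<in> sum h ` {F. F \<subseteq> mzeta_idx n \<and> finite F}"
      then obtain F where F: "F \<subseteq> mzeta_idx n" "finite F" and y: "y = sum h F" by auto
      obtain N0 where "\<forall>N\<ge>N0. F \<subseteq> DL n N" using DL_covers[OF F(2,1)] by blast
      then have FD: "F \<subseteq> DL n N0" by simp
      have "sum h F \<le> sum h (DL n N0)" by (rule sum_mono2[OF finite_DL FD]) (simp add: hnn)
      then show "y \<le> B" using bDL[of N0] y by simp
    qed
  qed
  have hs: "(h has_sum infsum h (mzeta_idx n)) (mzeta_idx n)" using summ by (simp add: summable_iff_has_sum_infsum)
  then have t1: "(sum h \<longlongrightarrow> infsum h (mzeta_idx n)) (finite_subsets_at_top (mzeta_idx n))"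
    by (simp add: has_sum_def)
  have t2: "filterlim (DL n) (finite_subsets_at_top (mzeta_idx n)) sequentially"
    unfolding filterlim_finite_subsets_at_top
  proof (intro allI impI)
    fix X assume X: "finite X \<and> X \<subseteq> mzeta_idx n"
    obtain N0 where "\<forall>N\<ge>N0. X \<subseteq> DL n N" using DL_covers[of X n] X by blast
    then show "\<forall>\<^sub>F y in sequentially. finite (DL n y) \<and> X \<subseteq> DL n y \<and> DL n y \<subseteq> mzeta_idx n"
      using finite_DL DL_sub unfolding eventually_sequentially by blast
  qed
  have "(\<lambda>N. sum h (DL n N)) \<longlonglongrightarrow> infsum h (mzeta_idx n)"
    using filterlim_compose[OF t1 t2] .
  then show ?thesis unfolding mqzeta_gq h_def n_def .
qed

lemma DL_one: "DL 1 N = (\<lambda>k. [k]) ` {1..N}"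
proof (intro equalityI subsetI)
  fix ks assume "ks \<in> DL 1 N"
  then obtain k where "ks = [k]" "0 < k" "k \<le> N" by (auto simp: DL_def mzeta_idx_def length_Suc_conv)
  then show "ks \<in> (\<lambda>k. [k]) ` {1..N}" by auto
qed (auto simp: DL_def mzeta_idx_def)

lemma trunc_one: "(\<Sum>ks\<in>DL (length [t]) N. \<Prod>j<length [t]. gq q ([t] ! j) (ks ! j)) = (\<Sum>x\<in>{1..N}. gq q t x)"
proof -
  have "(\<Sum>ks\<in>DL 1 N. \<Prod>j<1. gq q ([t] ! j) (ks ! j)) = (\<Sum>x\<in>{1..N}. gq q t x)"
    unfolding DL_one by (subst sum.reindex) (auto simp: inj_on_def)
  then show ?thesis by simp
qed

lemma prod_gq:
  fixes s :: "nat \<Rightarrow> real"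
  assumes q: "0 < q" "q < 1" and B: "finite B" "B \<noteq> {}" and x: "1 \<le> x"
  shows "(\<Prod>j\<in>B. gq q (s j) x) =
    (\<Sum>\<nu> = 0..card B - 1. real ((card B - 1) choose \<nu>) * (1 - q) ^ \<nu> * gq q ((\<Sum>j\<in>B. s j) - real \<nu>) x)"
proof -
  define a where "a = q powr real x"
  define Q where "Q = qint q (real x)"
  define m where "m = card B"
  define S where "S = (\<Sum>j\<in>B. s j)"
  have m1: "1 \<le> m" using B by (simp add: m_def Suc_le_eq card_gt_0_iff)
  have Q1: "1 \<le> Q" using qint_ge1[OF q x] by (simp add: Q_def)
  then have Qp: "0 < Q" by simp
  have ap: "0 < a" using q by (simp add: a_def)
  have QA: "(1 - q) * Q = 1 - a" using q by (simp add: Q_def a_def qint_def)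
  define E where "E = q powr ((S - real m) * real x) / Q powr S"
  have lhs: "(\<Prod>j\<in>B. gq q (s j) x) = E"
  proof -
    have "(\<Prod>j\<in>B. gq q (s j) x) = (\<Prod>j\<in>B. q powr ((s j - 1) * real x)) / (\<Prod>j\<in>B. Q powr (s j))"
      by (simp add: gq_def Q_def prod_dividef)
    also have "(\<Prod>j\<in>B. q powr ((s j - 1) * real x)) = q powr (\<Sum>j\<in>B. (s j - 1) * real x)"
      using q by (simp add: powr_sum)
    also have "(\<Sum>j\<in>B. (s j - 1) * real x) = (S - real m) * real x"
      by (simp add: S_def m_def sum_distrib_right[symmetric] sum_subtractf)
    also have "(\<Prod>j\<in>B. Q powr (s j)) = Q powr S"
      using Qp by (simp add: powr_sum S_def)
    finally show ?thesis by (simp add: E_def)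
  qed
  have trm: "gq q (S - real \<nu>) x = E * (a ^ (m - 1 - \<nu>) * Q ^ \<nu>)" if nu: "\<nu> \<le> m - 1" for \<nu>
  proof -
    have e1: "(S - real \<nu> - 1) * real x = (S - real m) * real x + real (m - 1 - \<nu>) * real x"
      using nu m1 by (simp add: of_nat_diff algebra_simps)
    have e2: "q powr (real (m - 1 - \<nu>) * real x) = a ^ (m - 1 - \<nu>)"
    proof -
      have "a ^ (m - 1 - \<nu>) = a powr real (m - 1 - \<nu>)" using ap by (simp add: powr_realpow)
      also have "\<dots> = q powr (real x * real (m - 1 - \<nu>))" by (simp add: a_def powr_powr)
      finally show ?thesis by (simp add: mult.commute)
    qed
    have e3: "Q powr (S - real \<nu>) = Q powr S / Q ^ \<nu>"
      using Qp by (simp add: powr_diff powr_realpow)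
    have "gq q (S - real \<nu>) x = q powr ((S - real \<nu> - 1) * real x) / Q powr (S - real \<nu>)"
      by (simp add: gq_def Q_def)
    also have "\<dots> = q powr ((S - real m) * real x) * q powr (real (m - 1 - \<nu>) * real x) / (Q powr S / Q ^ \<nu>)"
      unfolding e1 e3 by (simp only: powr_add)
    also have "\<dots> = q powr ((S - real m) * real x) * a ^ (m - 1 - \<nu>) / (Q powr S / Q ^ \<nu>)"
      by (simp only: e2)
    also have "\<dots> = E * (a ^ (m - 1 - \<nu>) * Q ^ \<nu>)"
      using Qp by (simp add: E_def field_simps)
    finally show ?thesis .
  qed
  have "(\<Sum>\<nu> = 0..m - 1. real ((m - 1) choose \<nu>) * (1 - q) ^ \<nu> * gq q (S - real \<nu>) x)
      = E * (\<Sum>\<nu>\<le>m - 1. real ((m - 1) choose \<nu>) * ((1 - q) * Q) ^ \<nu> * a ^ (m - 1 - \<nu>))"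
    unfolding atLeast0AtMost sum_distrib_left
  proof (intro sum.cong refl)
    fix \<nu> assume "\<nu> \<in> {..m - 1}"
    then have "\<nu> \<le> m - 1" by simp
    then show "real ((m - 1) choose \<nu>) * (1 - q) ^ \<nu> * gq q (S - real \<nu>) x =
      E * (real ((m - 1) choose \<nu>) * ((1 - q) * Q) ^ \<nu> * a ^ (m - 1 - \<nu>))"
      unfolding trm[OF \<open>\<nu> \<le> m - 1\<close>] power_mult_distrib by (simp only: mult_ac)
  qed
  also have "(\<Sum>\<nu>\<le>m - 1. real ((m - 1) choose \<nu>) * ((1 - q) * Q) ^ \<nu> * a ^ (m - 1 - \<nu>)) = ((1 - q) * Q + a) ^ (m - 1)"
    by (rule binomial_ring[symmetric])
  also have "\<dots> = 1" using QA by simp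
  finally show ?thesis using lhs by (simp add: m_def S_def)
qed

definition Vb :: "real \<Rightarrow> (nat \<Rightarrow> real) \<Rightarrow> nat set \<Rightarrow> real" where
  "Vb q s P = (\<Sum>\<nu> = 0..card P - 1. real ((card P - 1) choose \<nu>) * (1 - q) ^ \<nu> *
                   mqzeta q [(\<Sum>j\<in>P. s j) - real \<nu>])"

lemma Zs_lim:
  fixes s :: "nat \<Rightarrow> real"
  assumes q: "0 < q" "q < 1" and B: "finite B" "B \<noteq> {}" and s: "\<And>j. j \<in> B \<Longrightarrow> 1 < s j"
  shows "(\<lambda>N. Zs {1..N} (\<lambda>j x. gq q (s j) x) B) \<longlonglongrightarrow> Vb q s B"
proof -
  define S where "S = (\<Sum>j\<in>B. s j)"
  have "(\<Sum>j\<in>B. 1) < S" unfolding S_def using B s by (intro sum_strict_mono) auto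
  then have Sgt: "real (card B) < S" by simp
  have eq: "Zs {1..N} (\<lambda>j x. gq q (s j) x) B =
     (\<Sum>\<nu> = 0..card B - 1. real ((card B - 1) choose \<nu>) * (1 - q) ^ \<nu> * (\<Sum>x\<in>{1..N}. gq q (S - real \<nu>) x))" for N
  proof -
    have "Zs {1..N} (\<lambda>j x. gq q (s j) x) B = (\<Sum>x\<in>{1..N}. \<Sum>\<nu> = 0..card B - 1. real ((card B - 1) choose \<nu>) * (1 - q) ^ \<nu> * gq q (S - real \<nu>) x)"
      unfolding Zs_def S_def by (intro sum.cong refl prod_gq[OF q B]) simp
    also have "\<dots> = (\<Sum>\<nu> = 0..card B - 1. real ((card B - 1) choose \<nu>) * (1 - q) ^ \<nu> * (\<Sum>x\<in>{1..N}. gq q (S - real \<nu>) x))"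
      by (subst sum.swap) (simp add: sum_distrib_left)
    finally show ?thesis .
  qed
  have lim: "(\<lambda>N. \<Sum>x\<in>{1..N}. gq q (S - real \<nu>) x) \<longlonglongrightarrow> mqzeta q [S - real \<nu>]" if "\<nu> \<in> {0..card B - 1}" for \<nu>
  proof -
    have cB: "1 \<le> card B" using B by (simp add: Suc_le_eq card_gt_0_iff)
    have "\<nu> + 1 \<le> card B" using that cB by auto
    then have "real \<nu> + 1 \<le> real (card B)" by (metis of_nat_1 of_nat_add of_nat_le_iff)
    then have "1 < S - real \<nu>" using Sgt by linarith
    then have "(\<lambda>N. \<Sum>ks\<in>DL (length [S - real \<nu>]) N. \<Prod>j<length [S - real \<nu>]. gq q ([S - real \<nu>] ! j) (ks ! j)) \<longlonglongrightarrow> mqzeta q [S - real \<nu>]"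
      by (intro mq_trunc[OF q]) simp
    then show ?thesis unfolding trunc_one .
  qed
  show ?thesis unfolding eq Vb_def S_def[symmetric]
    by (intro tendsto_sum tendsto_mult_left lim)
qed

lemma main_lim:
  fixes q :: real and n :: nat and s :: "nat \<Rightarrow> real"
  assumes q: "0 < q" "q < 1" and s: "\<And>j. j \<in> {1..n} \<Longrightarrow> s j > 1"
  shows "(\<Sum>\<sigma> \<in> {\<sigma>. \<sigma> permutes {1..n}}. mqzeta q (map (\<lambda>i. s (\<sigma> i)) [1..<n+1]))
       = (\<Sum>P \<in> {P. partition_on {1..n} P}. \<Prod>B\<in>P. ec (card B) * Vb q s B)"
proof -
  define w where "w j x = gq q (s j) x" for j x
  define L where "L N = (\<Sum>\<sigma>\<in>{\<sigma>. \<sigma> permutes {1..n}}. \<Sum>ks\<in>DL n N. \<Prod>j<n. w (\<sigma> (Suc j)) (ks ! j))" for N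
  have fperm: "finite {\<sigma>. \<sigma> permutes {1..n}}" by (rule finite_permutations) simp
  have l1: "L \<longlonglongrightarrow> (\<Sum>\<sigma> \<in> {\<sigma>. \<sigma> permutes {1..n}}. mqzeta q (map (\<lambda>i. s (\<sigma> i)) [1..<n+1]))"
    unfolding L_def
  proof (intro tendsto_sum)
    fix \<sigma> assume "\<sigma> \<in> {\<sigma>. \<sigma> permutes {1..n}}"
    then have \<sigma>: "\<sigma> permutes {1..n}" by simp
    define ts where "ts = map (\<lambda>i. s (\<sigma> i)) [1..<n+1]"
    have lt: "length ts = n" by (simp add: ts_def)
    have tsj: "ts ! j = s (\<sigma> (Suc j))" if "j < n" for j using that by (simp add: ts_def del: upt_Suc)
    have "1 < ts ! j" if "j < length ts" for j
    proof -
      have "\<sigma> (Suc j) \<in> {1..n}" using permutes_in_image[OF \<sigma>] that lt by simp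
      then show ?thesis using s tsj that lt by simp
    qed
    from mq_trunc[OF q this]
    have "(\<lambda>N. \<Sum>ks\<in>DL (length ts) N. \<Prod>j<length ts. gq q (ts ! j) (ks ! j)) \<longlonglongrightarrow> mqzeta q ts" .
    moreover have "(\<Sum>ks\<in>DL (length ts) N. \<Prod>j<length ts. gq q (ts ! j) (ks ! j)) =
        (\<Sum>ks\<in>DL n N. \<Prod>j<n. w (\<sigma> (Suc j)) (ks ! j))" for N
      unfolding lt by (intro sum.cong refl prod.cong) (simp_all add: tsj w_def)
    ultimately show "(\<lambda>N. \<Sum>ks\<in>DL n N. \<Prod>j<n. w (\<sigma> (Suc j)) (ks ! j)) \<longlonglongrightarrow> mqzeta q (map (\<lambda>i. s (\<sigma> i)) [1..<n+1])"
      by (simp add: ts_def)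
  qed
  have l2: "L N = (\<Sum>P\<in>{P. partition_on {1..n} P}. Fp {1..N} w P)" for N
    unfolding L_def perm_dec by (rule inj_partition) auto
  have l3: "(\<lambda>N. \<Sum>P\<in>{P. partition_on {1..n} P}. Fp {1..N} w P) \<longlonglongrightarrow> (\<Sum>P \<in> {P. partition_on {1..n} P}. \<Prod>B\<in>P. ec (card B) * Vb q s B)"
  proof (intro tendsto_sum)
    fix P assume "P \<in> {P. partition_on {1..n} P}"
    then have P: "partition_on {1..n} P" by simp
    show "(\<lambda>N. Fp {1..N} w P) \<longlonglongrightarrow> (\<Prod>B\<in>P. ec (card B) * Vb q s B)"
      unfolding Fp_def
    proof (intro tendsto_prod tendsto_mult_left)
      fix B assume B: "B \<in> P"
      have sub: "B \<subseteq> {1..n}" using P B partition_onD1 by blast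
      have "finite B" using sub finite_subset by blast
      moreover have "B \<noteq> {}" using P B partition_onD3 by blast
      moreover have "\<And>j. j \<in> B \<Longrightarrow> 1 < s j" using s sub by blast
      ultimately have "(\<lambda>N. Zs {1..N} (\<lambda>j x. gq q (s j) x) B) \<longlonglongrightarrow> Vb q s B"
        by (rule Zs_lim[OF q])
      then show "(\<lambda>N. Zs {1..N} w B) \<longlonglongrightarrow> Vb q s B" by (simp add: w_def[abs_def])
    qed
  qed
  have "L \<longlonglongrightarrow> (\<Sum>P \<in> {P. partition_on {1..n} P}. \<Prod>B\<in>P. ec (card B) * Vb q s B)"
    unfolding l2 by (rule l3)
  then show ?thesis using LIMSEQ_unique[OF l1] by simp
qed

lemma sign_part:
  assumes P: "partition_on {1..n} P"
  shows "(\<Prod>B\<in>P. ec (card B) * V B) = (-1) ^ (n - card P) * (\<Prod>B\<in>P. fact (card B - 1) * V B)"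
proof -
  have fP: "finite P" using finite_elements[OF _ P] by simp
  have UP: "\<Union>P = {1..n}" using P partition_onD1 by blast
  have fB: "finite B" if "B \<in> P" for B using that UP by (metis Sup_upper finite_atLeastAtMost finite_subset)
  have cB: "1 \<le> card B" if "B \<in> P" for B
    using that fB P partition_onD3 by (fastforce simp: Suc_le_eq card_gt_0_iff)
  have "card (\<Union>P) = sum card P"
    by (rule card_Union_disjoint) (use P fB in \<open>auto simp: partition_on_def\<close>)
  then have sc: "sum card P = n" using UP by simp
  have "(\<Sum>B\<in>P. card B - 1) + card P = (\<Sum>B\<in>P. (card B - 1) + 1)"
    by (simp only: sum.distrib card_eq_sum)
  also have "\<dots> = sum card P"
  proof (intro sum.cong refl)
    fix B assume "B \<in> P"
    then have "1 \<le> card B" by (rule cB)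
    then show "card B - 1 + 1 = card B" by simp
  qed
  finally have "(\<Sum>B\<in>P. card B - 1) = n - card P" using sc by simp
  then have sg: "(\<Prod>B\<in>P. (-1::real) ^ (card B - 1)) = (-1) ^ (n - card P)"
    by (simp add: power_sum[symmetric])
  have "(\<Prod>B\<in>P. ec (card B) * V B) = (\<Prod>B\<in>P. (-1::real) ^ (card B - 1) * (fact (card B - 1) * V B))"
    by (simp add: ec_def mult.assoc)
  also have "\<dots> = (\<Prod>B\<in>P. (-1::real) ^ (card B - 1)) * (\<Prod>B\<in>P. fact (card B - 1) * V B)"
    by (rule prod.distrib)
  finally show ?thesis using sg by simp
qed

theorem theorem2p3:
  fixes q :: real and n :: nat and s :: "nat \<Rightarrow> real"
  assumes "0 < q" and "q < 1" and "0 < n"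
    and "\<And>j. j \<in> {1..n} \<Longrightarrow> s j > 1"
  shows "(\<Sum>\<sigma> \<in> {\<sigma>. \<sigma> permutes {1..n}}. mqzeta q (map (\<lambda>i. s (\<sigma> i)) [1..<n+1]))
       = (\<Sum>\<P> \<in> {\<P>. partition_on {1..n} \<P>}.
            (-1) ^ (n - card \<P>) *
            (\<Prod>P\<in>\<P>. fact (card P - 1) *
               (\<Sum>\<nu> = 0..card P - 1. real ((card P - 1) choose \<nu>) * (1 - q) ^ \<nu> *
                   mqzeta q [(\<Sum>j\<in>P. s j) - real \<nu>])))"
proof -
  have "(\<Sum>\<sigma> \<in> {\<sigma>. \<sigma> permutes {1..n}}. mqzeta q (map (\<lambda>i. s (\<sigma> i)) [1..<n+1]))
       = (\<Sum>P \<in> {P. partition_on {1..n} P}. \<Prod>B\<in>P. ec (card B) * Vb q s B)"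
    by (rule main_lim) (use assms in auto)
  also have "\<dots> = (\<Sum>P \<in> {P. partition_on {1..n} P}. (-1) ^ (n - card P) * (\<Prod>B\<in>P. fact (card B - 1) * Vb q s B))"
    by (intro sum.cong refl sign_part) simp
  finally show ?thesis by (simp add: Vb_def)
qed

end
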